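(* Let $n\ge 3$ and let $L$ and ${}^*L=e^{\sigma(x)}L+\beta$ be as in the context (a conformal $\beta$-change). Then the Finsler space $(M,L)$ is C-reducible if and only if the Finsler space $(M,{}^*L)$ is C-reducible. That is, the identity $c_{ijk}=h_{ij}M_k+h_{jk}M_i+h_{ki}M_j$ with $M_i=\frac{c_i}{n+1}$ holds identically if and only if ${}^*c_{ijk}={}^*h_{ij}\,{}^*M_k+{}^*h_{jk}\,{}^*M_i+{}^*h_{ki}\,{}^*M_j$ with ${}^*M_i=\frac{{}^*c_i}{n+1}$ holds identically.
   Context: $M$ is a smooth manifold of dimension $n$ with local coordinates $(x^i)$ and induced fiber coordinates $(y^i)$ on $TM$. $L(x,y)$ is a Finsler metric: positive and smooth for $y\neq0$, positively homogeneous of degree 1 in $y$, with positive definite fundamental tensor $g_{ij}=\frac12\frac{\partial^2L^2}{\partial y^i\partial y^j}$ and inverse $g^{ij}$. $\sigma(x)$ is a smooth function on $M$ and $\beta(x,y)=b_i(x)y^i$ is a 1-form; the conformal $\beta$-change is ${}^*L=e^{\sigma(x)}L+\beta$, assumed to be again a Finsler metric. Notation: $l_i=\partial L/\partial y^i$, $h_{ij}=g_{ij}-l_il_j$ (angular metric), $c_{ijk}=\frac12\partial g_{ij}/\partial y^k$, $c_i=g^{jk}c_{ijk}$. Quantities built from ${}^*L$ by the same formulas (using ${}^*g_{ij}$ and its inverse ${}^*g^{ij}$) are denoted with a left asterisk: ${}^*l_i,{}^*h_{ij},{}^*c_{ijk},{}^*c_i={}^*g^{jk}\,{}^*c_{ijk}$.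 A Finsler space of dimension $n\ge3$ is C-reducible if $c_{ijk}=h_{ij}M_k+h_{jk}M_i+h_{ki}M_j$ with $M_i=c_i/(n+1)$. *)

theory Defs
  imports "HOL-Analysis.Analysis"
begin

text \<open>Local-coordinate rendering. A coordinate chart of M is an open set U of R^n
 (index type 'n, n = CARD('n)); a point of TM over the chart is (x,y) with x in U and
 y in R^n (fiber coordinates).\<close>

definition pdir :: "('a::euclidean_space \<Rightarrow> real) \<Rightarrow> 'a \<Rightarrow> ('a \<Rightarrow> real)" where
  "pdir f v = (\<lambda>z. frechet_derivative f (at z) v)"

definition smooth_on :: "'a::euclidean_space set \<Rightarrow> ('a \<Rightarrow> real) \<Rightarrow> bool" where
  "smooth_on S f \<longleftrightarrow> (\<forall>vs. set vs \<subseteq> Basis \<longrightarrow> (foldr (\<lambda>v g. pdir g v) vs f) differentiable_on S)"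

definition dy :: "(real^'n \<Rightarrow> real) \<Rightarrow> 'n \<Rightarrow> (real^'n \<Rightarrow> real)" where
  "dy f i = pdir f (axis i 1)"

text \<open>Quantities built from a function F (= L(x,.) at a fixed point x).\<close>
definition ltens :: "(real^'n \<Rightarrow> real) \<Rightarrow> real^'n \<Rightarrow> 'n \<Rightarrow> real" where
  "ltens F y i = dy F i y"

definition gtens :: "(real^'n \<Rightarrow> real) \<Rightarrow> real^'n \<Rightarrow> 'n \<Rightarrow> 'n \<Rightarrow> real" where
  "gtens F y i j = (1/2) * dy (dy (\<lambda>z. (F z)^2) i) j y"

definition gmat :: "(real^'n \<Rightarrow> real) \<Rightarrow> real^'n \<Rightarrow> real^'n^'n" where
  "gmat F y = (\<chi> i j. gtens F y i j)"

definition ginv :: "(real^'n \<Rightarrow> real) \<Rightarrow> real^'n \<Rightarrow> 'n \<Rightarrow> 'n \<Rightarrow> real" where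
  "ginv F y i j = matrix_inv (gmat F y) $ i $ j"

definition htens :: "(real^'n \<Rightarrow> real) \<Rightarrow> real^'n \<Rightarrow> 'n \<Rightarrow> 'n \<Rightarrow> real" where
  "htens F y i j = gtens F y i j - ltens F y i * ltens F y j"

definition ctens :: "(real^'n \<Rightarrow> real) \<Rightarrow> real^'n \<Rightarrow> 'n \<Rightarrow> 'n \<Rightarrow> 'n \<Rightarrow> real" where
  "ctens F y i j k = (1/2) * dy (\<lambda>z. gtens F z i j) k y"

definition cvec :: "(real^'n \<Rightarrow> real) \<Rightarrow> real^'n \<Rightarrow> 'n \<Rightarrow> real" where
  "cvec F y i = (\<Sum>j\<in>UNIV. \<Sum>k\<in>UNIV. ginv F y j k * ctens F y i j k)"

definition Mvec :: "(real^'n \<Rightarrow> real) \<Rightarrow> real^'n \<Rightarrow> 'n \<Rightarrow> real" where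
  "Mvec F y i = cvec F y i / (real CARD('n) + 1)"

definition finsler_metric :: "(real^'n) set \<Rightarrow> (real^'n \<Rightarrow> real^'n \<Rightarrow> real) \<Rightarrow> bool" where
  "finsler_metric U L \<longleftrightarrow>
     smooth_on (U \<times> (UNIV - {0})) (\<lambda>(x, y). L x y) \<and>
     (\<forall>x\<in>U. \<forall>y. y \<noteq> 0 \<longrightarrow>
        L x y > 0 \<and>
        (\<forall>c>0. L x (c *\<^sub>R y) = c * L x y) \<and>
        (\<forall>v. v \<noteq> 0 \<longrightarrow> (\<Sum>i\<in>UNIV. \<Sum>j\<in>UNIV. gtens (L x) y i j * v $ i * v $ j) > 0))"

definition C_reducible :: "(real^'n) set \<Rightarrow> (real^'n \<Rightarrow> real^'n \<Rightarrow> real) \<Rightarrow> bool" where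
  "C_reducible U L \<longleftrightarrow>
     (\<forall>x\<in>U. \<forall>y. y \<noteq> 0 \<longrightarrow> (\<forall>i j k.
        ctens (L x) y i j k =
          htens (L x) y i j * Mvec (L x) y k + htens (L x) y j k * Mvec (L x) y i
          + htens (L x) y k i * Mvec (L x) y j))"

definition conf_beta_change ::
  "(real^'n \<Rightarrow> real) \<Rightarrow> (real^'n \<Rightarrow> real^'n) \<Rightarrow> (real^'n \<Rightarrow> real^'n \<Rightarrow> real) \<Rightarrow> (real^'n \<Rightarrow> real^'n \<Rightarrow> real)" where
  "conf_beta_change \<sigma> b L = (\<lambda>x y. exp (\<sigma> x) * L x y + (\<Sum>i\<in>UNIV. b x $ i * y $ i))"

end

theory Submission
  imports Defs "HOL-Analysis.Analysis"
begin


lemma fd_local: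
  assumes "open X" "x \<in> X" "\<And>z. z \<in> X \<Longrightarrow> f z = g z"
  shows "frechet_derivative f (at x) = frechet_derivative g (at x)"
proof -
  have "\<And>f'. (f has_derivative f') (at x) \<longleftrightarrow> (g has_derivative f') (at x)"
    using has_derivative_transform_within_open[OF _ assms(1,2)] assms(3) by metis
  then show ?thesis by (simp add: frechet_derivative_def)
qed

lemma pdir_local:
  assumes "open X" "x \<in> X" "\<And>z. z \<in> X \<Longrightarrow> f z = g z"
  shows "pdir f v x = pdir g v x"
  using fd_local[OF assms] by (simp add: pdir_def)

lemma dy_local:
  assumes "open X" "x \<in> X" "\<And>z. z \<in> X \<Longrightarrow> f z = g z"
  shows "dy f i x = dy g i x"
  using pdir_local[OF assms] by (simp add: dy_def)

lemma diff_local: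
  assumes "f differentiable at x" "open X" "x \<in> X" "\<And>z. z \<in> X \<Longrightarrow> f z = g z"
  shows "g differentiable at x"
  using assms has_derivative_transform_within_open unfolding differentiable_def by metis

lemma pdir_at: "(f has_derivative f') (at x) \<Longrightarrow> pdir f v x = f' v"
  by (simp add: pdir_def frechet_derivative_at[symmetric])

lemma dy_mult:
  assumes "f differentiable at z" "g differentiable at z"
  shows "dy (\<lambda>z. f z * g z) k z = f z * dy g k z + dy f k z * g z"
proof -
  have "((\<lambda>z. f z * g z) has_derivative (\<lambda>h. f z * frechet_derivative g (at z) h + frechet_derivative f (at z) h * g z)) (at z)"
    using has_derivative_mult[OF frechet_derivative_works[THEN iffD1, OF assms(1)] frechet_derivative_works[THEN iffD1, OF assms(2)]] .
  from pdir_at[OF this, of "axis k 1"] show ?thesis by (simp add: dy_def pdir_def)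
qed

lemma dy_add:
  assumes "f differentiable at z" "g differentiable at z"
  shows "dy (\<lambda>z. f z + g z) k z = dy f k z + dy g k z"
proof -
  have "((\<lambda>z. f z + g z) has_derivative (\<lambda>h. frechet_derivative f (at z) h + frechet_derivative g (at z) h)) (at z)"
    using has_derivative_add[OF frechet_derivative_works[THEN iffD1, OF assms(1)] frechet_derivative_works[THEN iffD1, OF assms(2)]] .
  from pdir_at[OF this, of "axis k 1"] show ?thesis by (simp add: dy_def pdir_def)
qed

lemma dy_cmult:
  assumes "f differentiable at z"
  shows "dy (\<lambda>z. c * f z) k z = c * dy f k z"
proof -
  have "((\<lambda>z. c * f z) has_derivative (\<lambda>h. c * frechet_derivative f (at z) h)) (at z)"
    using has_derivative_mult_right[OF frechet_derivative_works[THEN iffD1, OF assms(1)]] .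
  from pdir_at[OF this, of "axis k 1"] show ?thesis by (simp add: dy_def pdir_def)
qed

lemma dy_const: "dy (\<lambda>z. c) k z = 0"
  by (simp add: dy_def pdir_def)

lemma dy_lin: "dy (\<lambda>z::real^'n. \<Sum>l\<in>UNIV. bb $ l * z $ l) k z = bb $ k"
proof -
  have "((\<lambda>z::real^'n. \<Sum>l\<in>UNIV. bb $ l * z $ l) has_derivative (\<lambda>h. \<Sum>l\<in>UNIV. bb $ l * h $ l)) (at z)"
    by (intro has_derivative_sum has_derivative_mult_right bounded_linear_imp_has_derivative bounded_linear_vec_nth)
  from pdir_at[OF this, of "axis k 1"] have "dy (\<lambda>z::real^'n. \<Sum>l\<in>UNIV. bb $ l * z $ l) k z = (\<Sum>l\<in>UNIV. bb $ l * axis k 1 $ l)"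
    by (simp add: dy_def)
  also have "\<dots> = (\<Sum>l\<in>UNIV. if l = k then bb $ l else 0)" by (intro sum.cong) (auto simp: axis_def)
  also have "\<dots> = bb $ k" by simp
  finally show ?thesis .
qed

lemma lin_hasd: "((\<lambda>z::real^'n. \<Sum>l\<in>UNIV. bb $ l * z $ l) has_derivative (\<lambda>h. \<Sum>l\<in>UNIV. bb $ l * h $ l)) (at z)"
  by (intro has_derivative_sum has_derivative_mult_right bounded_linear_imp_has_derivative bounded_linear_vec_nth)

lemma lin_diff: "(\<lambda>z::real^'n. \<Sum>l\<in>UNIV. bb $ l * z $ l) differentiable at z"
  using lin_hasd unfolding differentiable_def by blast


lemma zero_basis_prod: "(v::'b::euclidean_space) \<in> Basis \<Longrightarrow> ((0::'a::euclidean_space), v) \<in> Basis"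
  by (auto simp: Basis_prod_def)

lemma slice_eq:
  fixes L :: "'a::euclidean_space \<Rightarrow> 'b::euclidean_space \<Rightarrow> real"
  assumes sm: "smooth_on (U \<times> S) (\<lambda>(x, y). L x y)" and oU: "open U" and oS: "open S" and x: "x \<in> U"
  shows "set vs \<subseteq> Basis \<Longrightarrow> \<forall>z\<in>S. foldr (\<lambda>v g. pdir g v) (map (\<lambda>v. (0, v)) vs) (\<lambda>(x, y). L x y) (x, z)
        = foldr (\<lambda>v g. pdir g v) vs (L x) z"
proof (induction vs)
  case Nil
  then show ?case by simp
next
  case (Cons v vs)
  let ?\<Psi> = "foldr (\<lambda>v g. pdir g v) (map (\<lambda>v. (0, v)) vs) (\<lambda>(x, y). L x y)"
  have oUS: "open (U \<times> S)" using oU oS by (simp add: open_Times)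
  have IH: "\<forall>z\<in>S. ?\<Psi> (x, z) = foldr (\<lambda>v g. pdir g v) vs (L x) z" using Cons by auto
  have bas: "set (map (\<lambda>v. (0::'a, v)) vs) \<subseteq> Basis" using Cons.prems by (auto intro: zero_basis_prod)
  show ?case
  proof
    fix z assume z: "z \<in> S"
    have "?\<Psi> differentiable_on (U \<times> S)" using sm bas unfolding smooth_on_def by blast
    then have "?\<Psi> differentiable at (x, z)" using oUS x z differentiable_on_eq_differentiable_at by blast
    then have d: "(?\<Psi> has_derivative frechet_derivative ?\<Psi> (at (x, z))) (at (x, z))"
      using frechet_derivative_works by blast
    have pd: "((\<lambda>z. (x, z)) has_derivative (\<lambda>w. (0, w))) (at z)"
      by (auto intro!: derivative_eq_intros)
    have "((\<lambda>z. ?\<Psi> (x, z)) has_derivative (\<lambda>w. frechet_derivative ?\<Psi> (at (x, z)) (0, w))) (at z)"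
      using has_derivative_compose[OF pd d] by simp
    then have e1: "pdir (\<lambda>z. ?\<Psi> (x, z)) v z = frechet_derivative ?\<Psi> (at (x, z)) (0, v)"
      by (rule pdir_at)
    have e2: "pdir (\<lambda>z. ?\<Psi> (x, z)) v z = pdir (foldr (\<lambda>v g. pdir g v) vs (L x)) v z"
      using pdir_local[OF oS z, of "\<lambda>z. ?\<Psi> (x, z)"] IH by auto
    show "foldr (\<lambda>v g. pdir g v) (map (\<lambda>v. (0, v)) (v # vs)) (\<lambda>(x, y). L x y) (x, z) =
         foldr (\<lambda>v g. pdir g v) (v # vs) (L x) z"
      using e1 e2 by (simp add: pdir_def)
  qed
qed

lemma slice_diff:
  fixes L :: "'a::euclidean_space \<Rightarrow> 'b::euclidean_space \<Rightarrow> real"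
  assumes sm: "smooth_on (U \<times> S) (\<lambda>(x, y). L x y)" and oU: "open U" and oS: "open S" and x: "x \<in> U"
    and vs: "set vs \<subseteq> Basis" and z: "z \<in> S"
  shows "foldr (\<lambda>v g. pdir g v) vs (L x) differentiable at z"
proof -
  let ?\<Psi> = "foldr (\<lambda>v g. pdir g v) (map (\<lambda>v. (0, v)) vs) (\<lambda>(x, y). L x y)"
  have oUS: "open (U \<times> S)" using oU oS by (simp add: open_Times)
  have bas: "set (map (\<lambda>v. (0::'a, v)) vs) \<subseteq> Basis" using vs by (auto intro: zero_basis_prod)
  have "?\<Psi> differentiable_on (U \<times> S)" using sm bas unfolding smooth_on_def by blast
  then have "?\<Psi> differentiable at (x, z)" using oUS x z differentiable_on_eq_differentiable_at by blast
  moreover have "(\<lambda>z. (x, z)) differentiable at z"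
    unfolding differentiable_def by (rule exI) (auto intro!: derivative_eq_intros)
  ultimately have "(\<lambda>z. ?\<Psi> (x, z)) differentiable at z"
    using differentiable_chain_at[of "\<lambda>z. (x, z)" z ?\<Psi>] by (simp add: o_def)
  then show ?thesis
    using diff_local[OF _ oS z] slice_eq[OF sm oU oS x vs] by blast
qed

definition sm3 :: "(real^'n \<Rightarrow> real) \<Rightarrow> bool" where
  "sm3 H \<longleftrightarrow> (\<forall>z. z \<noteq> 0 \<longrightarrow> H differentiable at z \<and> (\<forall>i. dy H i differentiable at z)
     \<and> (\<forall>i j. dy (dy H i) j differentiable at z) \<and> (\<forall>i j k. dy (dy (dy H i) j) k differentiable at z))"

lemma axis_Basis: "axis i (1::real) \<in> Basis"
  by (auto simp: Basis_vec_def)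

lemma finsler_sm3:
  assumes "finsler_metric U L" "open U" "x \<in> U"
  shows "sm3 (L x)"
proof -
  have sm: "smooth_on (U \<times> (UNIV - {0})) (\<lambda>(x, y). L x y)" using assms(1) by (simp add: finsler_metric_def)
  have oS: "open (UNIV - {0::real^'a})" by (simp add: open_delete)
  note D = slice_diff[OF sm assms(2) oS assms(3)]
  show ?thesis unfolding sm3_def
  proof (intro allI impI conjI)
    fix z :: "real^'a" assume z: "z \<noteq> 0"
    show "L x differentiable at z" using D[of "[]" z] z by simp
    show "\<And>i. dy (L x) i differentiable at z" using D[of "[axis _ 1]" z] z axis_Basis by (simp add: dy_def)
    show "\<And>i j. dy (dy (L x) i) j differentiable at z" using D[of "[axis _ 1, axis _ 1]" z] z axis_Basis by (simp add: dy_def)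
    show "\<And>i j k. dy (dy (dy (L x) i) j) k differentiable at z"
      using D[of "[axis _ 1, axis _ 1, axis _ 1]" z] z axis_Basis by (simp add: dy_def)
  qed
qed


lemma line_deriv:
  fixes f :: "'a::euclidean_space \<Rightarrow> real"
  assumes "f differentiable at (a + t *\<^sub>R u)"
  shows "((\<lambda>s. f (a + s *\<^sub>R u)) has_real_derivative pdir f u (a + t *\<^sub>R u)) (at t)"
proof -
  let ?D = "frechet_derivative f (at (a + t *\<^sub>R u))"
  have d: "(f has_derivative ?D) (at (a + t *\<^sub>R u))" using assms frechet_derivative_works by blast
  have l: "((\<lambda>s. a + s *\<^sub>R u) has_derivative (\<lambda>s. s *\<^sub>R u)) (at t)"
    by (auto intro!: derivative_eq_intros)
  have "((\<lambda>s. f (a + s *\<^sub>R u)) has_derivative (\<lambda>s. ?D (s *\<^sub>R u))) (at t)"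
    using has_derivative_compose[OF l d] .
  moreover have "(\<lambda>s. ?D (s *\<^sub>R u)) = (\<lambda>s. pdir f u (a + t *\<^sub>R u) * s)"
    using linear_scale[OF has_derivative_linear[OF d]] by (auto simp: pdir_def)
  ultimately show ?thesis by (simp add: has_field_derivative_def)
qed

lemma mvt2d:
  fixes f :: "'a::euclidean_space \<Rightarrow> real"
  assumes reg: "\<And>z. dist z y < \<delta> \<Longrightarrow> f differentiable at z \<and> pdir f u differentiable at z"
    and h: "h > 0" "h * (norm u + norm v) < \<delta>"
  shows "\<exists>p. dist p y < \<delta> \<and>
     f (y + h *\<^sub>R u + h *\<^sub>R v) - f (y + h *\<^sub>R u) - f (y + h *\<^sub>R v) + f y = h^2 * pdir (pdir f u) v p"
proof -
  have nu: "norm u \<ge> 0" "norm v \<ge> 0" by auto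
  have inb: "dist (y + s *\<^sub>R u + t *\<^sub>R v) y < \<delta>" if "0 \<le> s" "s \<le> h" "0 \<le> t" "t \<le> h" for s t
  proof -
    have "dist (y + s *\<^sub>R u + t *\<^sub>R v) y = norm (s *\<^sub>R u + t *\<^sub>R v)" by (simp add: dist_norm)
    also have "\<dots> \<le> s * norm u + t * norm v"
      using norm_triangle_ineq[of "s *\<^sub>R u" "t *\<^sub>R v"] that by simp
    also have "\<dots> \<le> h * norm u + h * norm v"
      using that nu by (intro add_mono mult_right_mono) auto
    finally show ?thesis using h by (simp add: distrib_left)
  qed
  define \<psi> where "\<psi> s = f ((y + h *\<^sub>R v) + s *\<^sub>R u) - f (y + s *\<^sub>R u)" for s
  have "DERIV \<psi> s :> pdir f u ((y + h *\<^sub>R v) + s *\<^sub>R u) - pdir f u (y + s *\<^sub>R u)" if "0 \<le> s" "s \<le> h" for s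
  proof -
    have "f differentiable at ((y + h *\<^sub>R v) + s *\<^sub>R u)"
      using reg inb[of s h] that h by (simp add: algebra_simps)
    moreover have "f differentiable at (y + s *\<^sub>R u)"
      using reg inb[of s 0] that h by simp
    ultimately show ?thesis unfolding \<psi>_def
      by (intro DERIV_diff line_deriv)
  qed
  from MVT2[OF h(1) this] obtain \<xi> where xi: "0 < \<xi>" "\<xi> < h"
    "\<psi> h - \<psi> 0 = (h - 0) * (pdir f u ((y + h *\<^sub>R v) + \<xi> *\<^sub>R u) - pdir f u (y + \<xi> *\<^sub>R u))"
    by blast
  define chi where "chi t = pdir f u ((y + \<xi> *\<^sub>R u) + t *\<^sub>R v)" for t
  have "DERIV chi t :> pdir (pdir f u) v ((y + \<xi> *\<^sub>R u) + t *\<^sub>R v)" if "0 \<le> t" "t \<le> h" for t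
  proof -
    have "pdir f u differentiable at ((y + \<xi> *\<^sub>R u) + t *\<^sub>R v)"
      using reg inb[of \<xi> t] that xi by simp
    then show ?thesis unfolding chi_def by (rule line_deriv)
  qed
  from MVT2[OF h(1) this] obtain \<eta> where eta: "0 < \<eta>" "\<eta> < h"
    "chi h - chi 0 = (h - 0) * pdir (pdir f u) v ((y + \<xi> *\<^sub>R u) + \<eta> *\<^sub>R v)"
    by blast
  have e1: "\<psi> h - \<psi> 0 = f (y + h *\<^sub>R u + h *\<^sub>R v) - f (y + h *\<^sub>R u) - f (y + h *\<^sub>R v) + f y"
    unfolding \<psi>_def by (simp add: algebra_simps)
  have e2: "pdir f u ((y + h *\<^sub>R v) + \<xi> *\<^sub>R u) - pdir f u (y + \<xi> *\<^sub>R u) = chi h - chi 0"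
    unfolding chi_def by (simp add: algebra_simps)
  show ?thesis
    apply (rule exI[of _ "(y + \<xi> *\<^sub>R u) + \<eta> *\<^sub>R v"])
    using inb[of \<xi> \<eta>] xi eta e1 e2 by (simp add: power2_eq_square)
qed

lemma abs_aux: "\<bar>(a::real) - c\<bar> < \<bar>c - e\<bar> / 2 \<Longrightarrow> \<bar>b - e\<bar> < \<bar>c - e\<bar> / 2 \<Longrightarrow> a = b \<Longrightarrow> False"
  by (simp add: abs_real_def split: if_split_asm)

lemma clairaut_gen:
  fixes f :: "'a::euclidean_space \<Rightarrow> real"
  assumes S: "open S" "y \<in> S"
    and reg: "\<And>z. z \<in> S \<Longrightarrow> f differentiable at z \<and> pdir f u differentiable at z \<and> pdir f v differentiable at z"
    and c1: "isCont (pdir (pdir f u) v) y" and c2: "isCont (pdir (pdir f v) u) y"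
  shows "pdir (pdir f u) v y = pdir (pdir f v) u y"
proof (rule ccontr)
  let ?Q1 = "pdir (pdir f u) v" and ?Q2 = "pdir (pdir f v) u"
  assume ne: "?Q1 y \<noteq> ?Q2 y"
  define d where "d = \<bar>?Q1 y - ?Q2 y\<bar>"
  have d: "d > 0" using ne by (simp add: d_def)
  obtain e0 where e0: "e0 > 0" "ball y e0 \<subseteq> S" using S open_contains_ball by blast
  obtain e1 where e1: "e1 > 0" "\<And>z. dist z y < e1 \<Longrightarrow> dist (?Q1 z) (?Q1 y) < d/2"
    using c1 d unfolding continuous_at_eps_delta by (meson half_gt_zero)
  obtain e2 where e2: "e2 > 0" "\<And>z. dist z y < e2 \<Longrightarrow> dist (?Q2 z) (?Q2 y) < d/2"
    using c2 d unfolding continuous_at_eps_delta by (meson half_gt_zero)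
  define \<delta> where "\<delta> = min e0 (min e1 e2)"
  have dpos: "\<delta> > 0" using e0 e1 e2 by (simp add: \<delta>_def)
  define h where "h = \<delta> / (2 * (norm u + norm v + 1))"
  have np: "norm u + norm v + 1 > 0" by (simp add: add_nonneg_pos)
  have hpos: "h > 0" using dpos np by (simp add: h_def)
  have "h * (norm u + norm v) < h * (norm u + norm v + 1)" using hpos by simp
  also have "\<dots> = \<delta> / 2" using np by (simp add: h_def field_simps)
  also have "\<dots> < \<delta>" using dpos by simp
  finally have hs: "h * (norm u + norm v) < \<delta>" .
  have hs': "h * (norm v + norm u) < \<delta>" using hs by (simp add: add.commute)
  have regb: "\<And>z. dist z y < \<delta> \<Longrightarrow> z \<in> S"
    using e0 by (auto simp: \<delta>_def dist_commute)
  obtain p1 where p1: "dist p1 y < \<delta>"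
    "f (y + h *\<^sub>R u + h *\<^sub>R v) - f (y + h *\<^sub>R u) - f (y + h *\<^sub>R v) + f y = h^2 * ?Q1 p1"
    using mvt2d[of y \<delta> f u h v] reg regb hpos hs by blast
  obtain p2 where p2: "dist p2 y < \<delta>"
    "f (y + h *\<^sub>R v + h *\<^sub>R u) - f (y + h *\<^sub>R v) - f (y + h *\<^sub>R u) + f y = h^2 * ?Q2 p2"
    using mvt2d[of y \<delta> f v h u] reg regb hpos hs' by blast
  have "h^2 * ?Q1 p1 = h^2 * ?Q2 p2" using p1(2) p2(2) by (simp add: algebra_simps)
  then have eq: "?Q1 p1 = ?Q2 p2" using hpos by simp
  have "dist (?Q1 p1) (?Q1 y) < d/2" using e1 p1 by (auto simp: \<delta>_def)
  moreover have "dist (?Q2 p2) (?Q2 y) < d/2" using e2 p2 by (auto simp: \<delta>_def)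
  ultimately show False using eq abs_aux unfolding d_def dist_real_def by metis
qed

lemma clairaut:
  fixes f :: "real^'n \<Rightarrow> real"
  assumes S: "open S" "y \<in> S"
    and reg: "\<And>z. z \<in> S \<Longrightarrow> f differentiable at z \<and> dy f i differentiable at z \<and> dy f j differentiable at z"
    and c1: "dy (dy f i) j differentiable at y" and c2: "dy (dy f j) i differentiable at y"
  shows "dy (dy f i) j y = dy (dy f j) i y"
proof -
  have "isCont (dy (dy f i) j) y" "isCont (dy (dy f j) i) y"
    using c1 c2 differentiable_imp_continuous_within by auto
  then show ?thesis
    using clairaut_gen[OF S, of f "axis i 1" "axis j 1"] reg unfolding dy_def
    by (auto simp: dy_def)
qed


lemma lin_expand:
  fixes z :: "real^'n"
  assumes "linear D"
  shows "D z = (\<Sum>k\<in>UNIV. z $ k * D (axis k 1))"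
proof -
  have "D z = D (\<Sum>k\<in>UNIV. z $ k *\<^sub>R axis k 1)"
    using basis_expansion[of z] by (simp add: scalar_mult_eq_scaleR)
  also have "\<dots> = (\<Sum>k\<in>UNIV. z $ k * D (axis k 1))"
    using assms by (simp add: linear_sum linear_scale)
  finally show ?thesis .
qed

lemma euler:
  fixes H :: "real^'n \<Rightarrow> real"
  assumes dH: "H differentiable at z" and hom: "\<And>t. t > 0 \<Longrightarrow> H (t *\<^sub>R z) = w t * H z"
    and dw: "(w has_real_derivative w') (at 1)"
  shows "(\<Sum>k\<in>UNIV. dy H k z * z $ k) = w' * H z"
proof -
  have "H differentiable at (0 + 1 *\<^sub>R z)" using dH by simp
  from line_deriv[OF this] have d1: "((\<lambda>s. H (s *\<^sub>R z)) has_real_derivative pdir H z z) (at 1)" by simp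
  have d2: "((\<lambda>s. w s * H z) has_real_derivative w' * H z) (at 1)"
    using DERIV_cmult_right[OF dw] .
  have "((\<lambda>s. H (s *\<^sub>R z)) has_real_derivative w' * H z) (at 1)"
    by (rule has_field_derivative_transform_within_open[OF d2, of "{0<..}"]) (auto simp: hom)
  with d1 have e: "pdir H z z = w' * H z" using DERIV_unique by blast
  have lin: "linear (frechet_derivative H (at z))"
    using dH frechet_derivative_works has_derivative_linear by blast
  have "pdir H z z = (\<Sum>k\<in>UNIV. z $ k * dy H k z)"
    unfolding pdir_def dy_def using lin_expand[OF lin, of z] by simp
  with e show ?thesis by (simp add: mult.commute)
qed

lemma homog_deriv:
  fixes H :: "real^'n \<Rightarrow> real"
  assumes dH: "\<And>z. z \<noteq> 0 \<Longrightarrow> H differentiable at z"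
    and hom: "\<And>z t. z \<noteq> 0 \<Longrightarrow> t > 0 \<Longrightarrow> H (t *\<^sub>R z) = w t * H z"
    and z: "z \<noteq> 0" and t: "t > 0"
  shows "t * dy H i (t *\<^sub>R z) = w t * dy H i z"
proof -
  let ?D1 = "frechet_derivative H (at (t *\<^sub>R z))" and ?D2 = "frechet_derivative H (at z)"
  have tz: "t *\<^sub>R z \<noteq> 0" using z t by simp
  have d1: "(H has_derivative ?D1) (at (t *\<^sub>R z))" using dH[OF tz] frechet_derivative_works by blast
  have d2: "(H has_derivative ?D2) (at z)" using dH[OF z] frechet_derivative_works by blast
  have ls: "((\<lambda>z'. t *\<^sub>R z') has_derivative (\<lambda>v. t *\<^sub>R v)) (at z)"
    by (auto intro!: derivative_eq_intros)
  have k1: "((\<lambda>z'. H (t *\<^sub>R z')) has_derivative (\<lambda>v. ?D1 (t *\<^sub>R v))) (at z)"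
    using has_derivative_compose[OF ls d1] .
  have k2: "((\<lambda>z'. w t * H z') has_derivative (\<lambda>v. w t * ?D2 v)) (at z)"
    using has_derivative_mult_right[OF d2] .
  have k1': "((\<lambda>z'. w t * H z') has_derivative (\<lambda>v. ?D1 (t *\<^sub>R v))) (at z)"
    by (rule has_derivative_transform_within_open[OF k1, of "UNIV - {0}"]) (auto simp: open_delete z hom t)
  have "(\<lambda>v. ?D1 (t *\<^sub>R v)) = (\<lambda>v. w t * ?D2 v)" using has_derivative_unique[OF k1' k2] .
  then have "?D1 (t *\<^sub>R axis i 1) = w t * ?D2 (axis i 1)" by metis
  moreover have "?D1 (t *\<^sub>R axis i 1) = t * ?D1 (axis i 1)"
    using linear_scale[OF has_derivative_linear[OF d1]] by simp
  ultimately show ?thesis by (simp add: dy_def pdir_def)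
qed


lemma sm3_D:
  assumes "sm3 H" "z \<noteq> 0"
  shows "H differentiable at z" "dy H i differentiable at z" "dy (dy H i) j differentiable at z"
    "dy (dy (dy H i) j) k differentiable at z"
  using assms unfolding sm3_def by blast+

lemma gt_formula:
  assumes sm: "sm3 H" and z: "z \<noteq> 0"
  shows "gtens H z i j = dy H i z * dy H j z + H z * dy (dy H i) j z"
proof -
  have o: "open (UNIV - {0::real^'n})" by (simp add: open_delete)
  have sq: "dy (\<lambda>z. (H z)^2) i w = 2 * (H w * dy H i w)" if "w \<noteq> 0" for w
  proof -
    have "dy (\<lambda>z. (H z)^2) i w = dy (\<lambda>z. H z * H z) i w" by (simp add: power2_eq_square)
    also have "\<dots> = 2 * (H w * dy H i w)" using dy_mult[OF sm3_D(1)[OF sm that] sm3_D(1)[OF sm that]] by simp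
    finally show ?thesis .
  qed
  have "dy (dy (\<lambda>z. (H z)^2) i) j z = dy (\<lambda>w. 2 * (H w * dy H i w)) j z"
    by (rule dy_local[OF o]) (use z sq in auto)
  also have "\<dots> = 2 * (H z * dy (dy H i) j z + dy H j z * dy H i z)"
    using dy_cmult[OF differentiable_mult[OF sm3_D(1,2)[OF sm z]]] dy_mult[OF sm3_D(1,2)[OF sm z]]
    by simp
  finally show ?thesis by (simp add: gtens_def)
qed

lemma ct_formula:
  assumes sm: "sm3 H" and y: "y \<noteq> 0"
  shows "ctens H y i j k = (1/2) * (dy (dy H i) k y * dy H j y + dy H i y * dy (dy H j) k y
     + dy H k y * dy (dy H i) j y + H y * dy (dy (dy H i) j) k y)"
proof -
  have o: "open (UNIV - {0::real^'n})" by (simp add: open_delete)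
  have "dy (\<lambda>z. gtens H z i j) k y = dy (\<lambda>z. dy H i z * dy H j z + H z * dy (dy H i) j z) k y"
    by (rule dy_local[OF o]) (use y gt_formula[OF sm] in auto)
  also have "\<dots> = dy (dy H i) k y * dy H j y + dy H i y * dy (dy H j) k y
     + dy H k y * dy (dy H i) j y + H y * dy (dy (dy H i) j) k y"
    using sm3_D[OF sm y]
    by (simp add: dy_add differentiable_mult dy_mult algebra_simps)
  finally show ?thesis by (simp add: ctens_def)
qed

locale hfun =
  fixes F :: "real^'n \<Rightarrow> real"
  assumes sm: "sm3 F"
    and hom: "\<And>z t. z \<noteq> 0 \<Longrightarrow> t > 0 \<Longrightarrow> F (t *\<^sub>R z) = t * F z"
begin

lemma o: "open (UNIV - {0::real^'n})" by (simp add: open_delete)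

lemma h1: "z \<noteq> 0 \<Longrightarrow> t > 0 \<Longrightarrow> dy F i (t *\<^sub>R z) = dy F i z"
  using homog_deriv[of F "\<lambda>t. t" z t i] sm3_D(1)[OF sm] hom by auto

lemma h2: "z \<noteq> 0 \<Longrightarrow> t > 0 \<Longrightarrow> dy (dy F i) j (t *\<^sub>R z) = (1/t) * dy (dy F i) j z"
  using homog_deriv[of "dy F i" "\<lambda>t. 1" z t j] sm3_D(2)[OF sm] h1 by (auto simp: field_simps)

lemma E1: "z \<noteq> 0 \<Longrightarrow> (\<Sum>k\<in>UNIV. dy F k z * z $ k) = F z"
  using euler[of F z "\<lambda>t. t" 1] sm3_D(1)[OF sm] hom by (auto intro!: derivative_eq_intros)

lemma E2: "z \<noteq> 0 \<Longrightarrow> (\<Sum>k\<in>UNIV. dy (dy F i) k z * z $ k) = 0"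
  using euler[of "dy F i" z "\<lambda>t. 1" 0] sm3_D(2)[OF sm] h1 by (auto intro!: derivative_eq_intros)

lemma E3: "z \<noteq> 0 \<Longrightarrow> (\<Sum>k\<in>UNIV. dy (dy (dy F i) j) k z * z $ k) = - dy (dy F i) j z"
proof -
  assume z: "z \<noteq> 0"
  have d: "((\<lambda>t::real. 1/t) has_real_derivative -1) (at 1)"
    using DERIV_inverse[of "1::real"] by (simp add: inverse_eq_divide)
  show ?thesis using euler[of "dy (dy F i) j" z "\<lambda>t. 1/t" "-1", OF _ _ d] sm3_D(3)[OF sm] h2 z by auto
qed

lemma S2: "z \<noteq> 0 \<Longrightarrow> dy (dy F i) j z = dy (dy F j) i z"
  by (rule clairaut[OF o]) (use sm3_D[OF sm] in auto)

lemma S3: "z \<noteq> 0 \<Longrightarrow> dy (dy (dy F i) j) k z = dy (dy (dy F i) k) j z"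
proof -
  assume z: "z \<noteq> 0"
  have "dy (dy (dy F i) j) k z = dy (dy (dy F i) k) j z"
    by (rule clairaut[OF o]) (use sm3_D[OF sm] z in auto)
  then show ?thesis .
qed

lemma E3': "z \<noteq> 0 \<Longrightarrow> (\<Sum>j\<in>UNIV. dy (dy (dy F i) j) k z * z $ j) = - dy (dy F i) k z"
  using E3[of z i k] S3[of z i _ k] by simp

end


lemma delta_sum: "(\<Sum>b\<in>(UNIV::'a::finite set). (if j = b then 1 else 0) * f b) = (f j::real)"
  by (simp add: if_distrib if_distribR cong: if_cong)

lemma delta_sum': "(\<Sum>b\<in>(UNIV::'a::finite set). f b * (if b = j then 1 else 0)) = (f j::real)"
  by (simp add: if_distrib if_distribR cong: if_cong)

lemma minv:
  fixes A :: "real^'n^'n"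
  assumes "invertible A"
  shows "A ** matrix_inv A = mat 1" "matrix_inv A ** A = mat 1"
proof -
  have "\<exists>A'. A ** A' = mat 1 \<and> A' ** A = mat 1" using assms by (simp add: invertible_def)
  then have "A ** matrix_inv A = mat 1 \<and> matrix_inv A ** A = mat 1"
    unfolding matrix_inv_def by (rule someI_ex)
  then show "A ** matrix_inv A = mat 1" "matrix_inv A ** A = mat 1" by auto
qed

lemma minv_entry:
  fixes A :: "real^'n^'n"
  assumes "invertible A"
  shows "(\<Sum>k\<in>UNIV. A $ i $ k * matrix_inv A $ k $ j) = (if i = j then 1 else 0)"
    "(\<Sum>k\<in>UNIV. matrix_inv A $ i $ k * A $ k $ j) = (if i = j then 1 else 0)"
  using minv[OF assms] by (auto simp: vec_eq_iff matrix_matrix_mult_def mat_def)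


locale alg =
  fixes F G c :: real and u bb y :: "real^'n" and Fs :: "'n \<Rightarrow> 'n \<Rightarrow> real"
    and Ft :: "'n \<Rightarrow> 'n \<Rightarrow> 'n \<Rightarrow> real"
  assumes Fp: "F > 0" and Gp: "G > 0" and cp: "c > 0"
    and Gd: "G = c * F + (\<Sum>l\<in>UNIV. bb$l * y$l)"
    and E1: "(\<Sum>k\<in>UNIV. u$k * y$k) = F"
    and E2: "\<And>i. (\<Sum>k\<in>UNIV. Fs i k * y$k) = 0"
    and S2: "\<And>i j. Fs i j = Fs j i"
    and E3: "\<And>i j. (\<Sum>k\<in>UNIV. Ft i j k * y$k) = - Fs i j"
    and E3': "\<And>i k. (\<Sum>j\<in>UNIV. Ft i j k * y$j) = - Fs i k"
    and ig: "invertible (\<chi> i j. u$i*u$j + F * Fs i j)"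
    and iA: "invertible (\<chi> i j. (c*u$i + bb$i)*(c*u$j + bb$j) + G * (c * Fs i j))"
begin

definition "gm = (\<chi> i j. u$i*u$j + F * Fs i j)"
definition "Am = (\<chi> i j. (c*u$i + bb$i)*(c*u$j + bb$j) + G * (c * Fs i j))"
definition "v i = c*u$i + bb$i"
definition "K j k = matrix_inv gm $ j $ k"
definition "B j k = matrix_inv Am $ j $ k"
definition "\<tau> = c*G/F"
definition "m k = v k - (G/F) * u$k"

lemma gm_e: "gm $ i $ j = u$i*u$j + F * Fs i j" by (simp add: gm_def)
lemma Am_e: "Am $ i $ j = v i * v j + G * (c * Fs i j)" by (simp add: Am_def v_def)

lemma KG: "(\<Sum>k\<in>UNIV. K j k * gm $ k $ i) = (if j = i then 1 else 0)"
  using minv_entry(2)[OF ig[folded gm_def]] by (simp add: K_def)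
lemma GK: "(\<Sum>j\<in>UNIV. gm $ i $ j * K j k) = (if i = k then 1 else 0)"
  using minv_entry(1)[OF ig[folded gm_def]] by (simp add: K_def)
lemma BA: "(\<Sum>k\<in>UNIV. B j k * Am $ k $ i) = (if j = i then 1 else 0)"
  using minv_entry(2)[OF iA[folded Am_def]] by (simp add: B_def)
lemma AB: "(\<Sum>j\<in>UNIV. Am $ i $ j * B j k) = (if i = k then 1 else 0)"
  using minv_entry(1)[OF iA[folded Am_def]] by (simp add: B_def)

lemma E2': "(\<Sum>k\<in>UNIV. y$k * Fs k i) = 0"
  using E2[of i] by (simp add: S2 mult.commute)

lemma vy: "(\<Sum>k\<in>UNIV. v k * y$k) = G"
proof -
  have "(\<Sum>k\<in>UNIV. v k * y$k) = c * (\<Sum>k\<in>UNIV. u$k * y$k) + (\<Sum>l\<in>UNIV. bb$l * y$l)"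
    by (simp add: v_def algebra_simps sum.distrib sum_distrib_left)
  then show ?thesis using E1 Gd by simp
qed

lemma my: "(\<Sum>k\<in>UNIV. m k * y$k) = 0"
proof -
  have "(\<Sum>k\<in>UNIV. m k * y$k) = (\<Sum>k\<in>UNIV. v k * y$k) - (G/F) * (\<Sum>k\<in>UNIV. u$k * y$k)"
    by (simp add: m_def algebra_simps sum_subtractf sum_distrib_left)
  then show ?thesis using vy E1 Fp by simp
qed

lemma gy: "(\<Sum>i\<in>UNIV. gm $ k $ i * y$i) = F * u$k"
proof -
  have "(\<Sum>i\<in>UNIV. gm $ k $ i * y$i) = u$k * (\<Sum>i\<in>UNIV. u$i * y$i) + F * (\<Sum>i\<in>UNIV. Fs k i * y$i)"
    by (simp add: gm_e algebra_simps sum.distrib sum_distrib_left)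
  then show ?thesis using E1 E2 by simp
qed

lemma yg: "(\<Sum>i\<in>UNIV. y$i * gm $ i $ j) = F * u$j"
proof -
  have "(\<Sum>i\<in>UNIV. y$i * gm $ i $ j) = u$j * (\<Sum>i\<in>UNIV. u$i * y$i) + F * (\<Sum>i\<in>UNIV. y$i * Fs i j)"
    by (simp add: gm_e algebra_simps sum.distrib sum_distrib_left)
  then show ?thesis using E1 E2' by simp
qed

lemma Ay: "(\<Sum>i\<in>UNIV. Am $ k $ i * y$i) = G * v k"
proof -
  have "(\<Sum>i\<in>UNIV. Am $ k $ i * y$i) = v k * (\<Sum>i\<in>UNIV. v i * y$i) + G * c * (\<Sum>i\<in>UNIV. Fs k i * y$i)"
    by (simp add: Am_e algebra_simps sum.distrib sum_distrib_left)
  then show ?thesis using vy E2 by simp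
qed

lemma Ku: "(\<Sum>k\<in>UNIV. K j k * u$k) = y$j / F"
proof -
  have "y$j = (\<Sum>i\<in>UNIV. (\<Sum>k\<in>UNIV. K j k * gm $ k $ i) * y$i)"
    by (simp add: KG delta_sum)
  also have "\<dots> = (\<Sum>k\<in>UNIV. K j k * (\<Sum>i\<in>UNIV. gm $ k $ i * y$i))"
    by (simp only: sum_distrib_left sum_distrib_right mult.assoc) (rule sum.swap)
  also have "\<dots> = (\<Sum>k\<in>UNIV. K j k * (F * u$k))"
    by (simp only: gy)
  also have "\<dots> = F * (\<Sum>k\<in>UNIV. K j k * u$k)"
    by (simp add: sum_distrib_left mult_ac)
  finally show ?thesis using Fp by (simp add: field_simps)
qed

lemma uK: "(\<Sum>j\<in>UNIV. u$j * K j k) = y$k / F"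
proof -
  have "y$k = (\<Sum>i\<in>UNIV. y$i * (\<Sum>j\<in>UNIV. gm $ i $ j * K j k))"
    by (simp add: GK delta_sum')
  also have "\<dots> = (\<Sum>j\<in>UNIV. (\<Sum>i\<in>UNIV. y$i * gm $ i $ j) * K j k)"
    by (simp only: sum_distrib_left sum_distrib_right mult.assoc) (rule sum.swap)
  also have "\<dots> = F * (\<Sum>j\<in>UNIV. u$j * K j k)"
    by (simp add: yg sum_distrib_left mult_ac)
  finally show ?thesis using Fp by (simp add: field_simps)
qed

lemma Bv: "(\<Sum>k\<in>UNIV. B j k * v k) = y$j / G"
proof -
  have "y$j = (\<Sum>i\<in>UNIV. (\<Sum>k\<in>UNIV. B j k * Am $ k $ i) * y$i)"
    by (simp add: BA delta_sum)
  also have "\<dots> = (\<Sum>k\<in>UNIV. B j k * (\<Sum>i\<in>UNIV. Am $ k $ i * y$i))"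
    by (simp only: sum_distrib_left sum_distrib_right mult.assoc) (rule sum.swap)
  also have "\<dots> = (\<Sum>k\<in>UNIV. B j k * (G * v k))"
    by (simp only: Ay)
  also have "\<dots> = G * (\<Sum>k\<in>UNIV. B j k * v k)"
    by (simp add: sum_distrib_left mult_ac)
  finally show ?thesis using Gp by (simp add: field_simps)
qed


lemma tau_pos: "\<tau> > 0" using cp Gp Fp by (simp add: \<tau>_def)

lemma Aeq: "Am $ a $ b = \<tau> * gm $ a $ b - \<tau> * (u$a * u$b) + v a * v b"
  using Fp by (simp add: Am_e gm_e \<tau>_def field_simps)

definition "p j = (\<Sum>a\<in>UNIV. B j a * u$a)"
definition "q k = (\<Sum>b\<in>UNIV. v b * K b k)"

lemma AK: "(\<Sum>b\<in>UNIV. Am $ a $ b * K b k) = \<tau> * (if a = k then 1 else 0) - \<tau> * u$a * (y$k / F) + v a * q k"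
proof -
  have "(\<Sum>b\<in>UNIV. Am $ a $ b * K b k) = \<tau> * (\<Sum>b\<in>UNIV. gm $ a $ b * K b k) - \<tau> * u$a * (\<Sum>b\<in>UNIV. u$b * K b k) + v a * (\<Sum>b\<in>UNIV. v b * K b k)"
    by (simp add: Aeq algebra_simps sum.distrib sum_subtractf sum_distrib_left)
  then show ?thesis by (simp add: GK uK q_def)
qed

lemma key: "B j k = K j k / \<tau> + p j * y$k / F - y$j * q k / (\<tau> * G)"
proof -
  have "K j k = (\<Sum>b\<in>UNIV. (\<Sum>a\<in>UNIV. B j a * Am $ a $ b) * K b k)"
    by (simp add: BA delta_sum)
  also have "\<dots> = (\<Sum>a\<in>UNIV. B j a * (\<Sum>b\<in>UNIV. Am $ a $ b * K b k))"
    by (simp only: sum_distrib_left sum_distrib_right mult.assoc) (rule sum.swap)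
  also have "\<dots> = (\<Sum>a\<in>UNIV. B j a * (\<tau> * (if a = k then 1 else 0) - \<tau> * u$a * (y$k / F) + v a * q k))"
    by (simp only: AK)
  also have "\<dots> = \<tau> * (\<Sum>a\<in>UNIV. B j a * (if a = k then 1 else 0)) - \<tau> * (y$k / F) * (\<Sum>a\<in>UNIV. B j a * u$a)
      + q k * (\<Sum>a\<in>UNIV. B j a * v a)"
    by (simp add: algebra_simps sum.distrib sum_subtractf sum_distrib_left)
  also have "\<dots> = \<tau> * B j k - \<tau> * (y$k / F) * p j + q k * (y$j / G)"
    by (simp add: delta_sum' Bv p_def)
  finally have "K j k = \<tau> * B j k - \<tau> * (y$k / F) * p j + q k * (y$j / G)" .
  then have e: "\<tau> * B j k = K j k + \<tau> * (y$k / F) * p j - q k * (y$j / G)" by linarith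
  have "B j k = (\<tau> * B j k) / \<tau>" using tau_pos by simp
  also have "\<dots> = (K j k + \<tau> * (y$k / F) * p j - q k * (y$j / G)) / \<tau>" by (simp only: e)
  also have "\<dots> = K j k / \<tau> + p j * y$k / F - y$j * q k / (\<tau> * G)"
    using tau_pos by (simp add: field_simps)
  finally show ?thesis .
qed

lemma traceB:
  assumes X1: "\<And>j. (\<Sum>k\<in>UNIV. X j k * y$k) = 0" and X2: "\<And>k. (\<Sum>j\<in>UNIV. y$j * X j k) = 0"
  shows "(\<Sum>j\<in>UNIV. \<Sum>k\<in>UNIV. B j k * X j k) = (1/\<tau>) * (\<Sum>j\<in>UNIV. \<Sum>k\<in>UNIV. K j k * X j k)"
proof -
  have "(\<Sum>j\<in>UNIV. \<Sum>k\<in>UNIV. B j k * X j k) =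
     (\<Sum>j\<in>UNIV. \<Sum>k\<in>UNIV. (1/\<tau>) * (K j k * X j k)) + (\<Sum>j\<in>UNIV. \<Sum>k\<in>UNIV. (p j / F) * (X j k * y$k))
     - (\<Sum>j\<in>UNIV. \<Sum>k\<in>UNIV. (q k / (\<tau> * G)) * (y$j * X j k))"
    by (simp add: key algebra_simps sum.distrib sum_subtractf)
  also have "(\<Sum>j\<in>UNIV. \<Sum>k\<in>UNIV. (p j / F) * (X j k * y$k)) = (\<Sum>j\<in>UNIV. (p j / F) * (\<Sum>k\<in>UNIV. X j k * y$k))"
    by (simp only: sum_distrib_left)
  also have "\<dots> = 0" by (simp add: X1)
  also have "(\<Sum>j\<in>UNIV. \<Sum>k\<in>UNIV. (q k / (\<tau> * G)) * (y$j * X j k)) =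
      (\<Sum>k\<in>UNIV. \<Sum>j\<in>UNIV. (q k / (\<tau> * G)) * (y$j * X j k))"
    by (rule sum.swap)
  also have "\<dots> = (\<Sum>k\<in>UNIV. (q k / (\<tau> * G)) * (\<Sum>j\<in>UNIV. y$j * X j k))"
    by (simp only: sum_distrib_left)
  also have "\<dots> = 0" by (simp add: X2)
  finally show ?thesis by (simp add: sum_distrib_left)
qed


definition "Cf i j k = (1/2) * (Fs i k * u$j + u$i * Fs j k + u$k * Fs i j + F * Ft i j k)"
definition "Cg i j k = (1/2) * ((c * Fs i k) * v j + v i * (c * Fs j k) + v k * (c * Fs i j) + G * (c * Ft i j k))"

lemma Cg_c1: "(\<Sum>k\<in>UNIV. Cg i j k * y$k) = 0"
proof -
  have "(\<Sum>k\<in>UNIV. Cg i j k * y$k) = (c/2) * (v j * (\<Sum>k\<in>UNIV. Fs i k * y$k) + v i * (\<Sum>k\<in>UNIV. Fs j k * y$k)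
     + Fs i j * (\<Sum>k\<in>UNIV. v k * y$k) + G * (\<Sum>k\<in>UNIV. Ft i j k * y$k))"
    by (simp add: Cg_def algebra_simps sum.distrib sum_distrib_left)
  then show ?thesis by (simp add: E2 vy E3)
qed

lemma Cg_c2: "(\<Sum>j\<in>UNIV. y$j * Cg i j k) = 0"
proof -
  have "(\<Sum>j\<in>UNIV. y$j * Cg i j k) = (c/2) * (Fs i k * (\<Sum>j\<in>UNIV. v j * y$j) + v i * (\<Sum>j\<in>UNIV. y$j * Fs j k)
     + v k * (\<Sum>j\<in>UNIV. Fs i j * y$j) + G * (\<Sum>j\<in>UNIV. Ft i j k * y$j))"
    by (simp add: Cg_def algebra_simps sum.distrib sum_distrib_left)
  then show ?thesis by (simp add: E2 E2' vy E3')
qed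

lemma Cg_eq: "Cg i j k = \<tau> * Cf i j k + (c/2) * (Fs i k * m j + Fs j k * m i + Fs i j * m k)"
  using Fp by (simp add: Cg_def Cf_def \<tau>_def m_def field_simps)

lemma KFs: "F * (\<Sum>k\<in>UNIV. K j k * Fs k i) = (if j = i then 1 else 0) - y$j * u$i / F"
proof -
  have "(if j = i then 1 else 0) = (\<Sum>k\<in>UNIV. K j k * gm $ k $ i)" by (simp add: KG)
  also have "\<dots> = u$i * (\<Sum>k\<in>UNIV. K j k * u$k) + F * (\<Sum>k\<in>UNIV. K j k * Fs k i)"
    by (simp add: gm_e algebra_simps sum.distrib sum_distrib_left)
  finally show ?thesis by (simp add: Ku)
qed

lemma FsK: "F * (\<Sum>j\<in>UNIV. Fs i j * K j k) = (if i = k then 1 else 0) - u$i * y$k / F"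
proof -
  have "(if i = k then 1 else 0) = (\<Sum>j\<in>UNIV. gm $ i $ j * K j k)" by (simp add: GK)
  also have "\<dots> = u$i * (\<Sum>j\<in>UNIV. u$j * K j k) + F * (\<Sum>j\<in>UNIV. Fs i j * K j k)"
    by (simp add: gm_e algebra_simps sum.distrib sum_distrib_left)
  finally show ?thesis by (simp add: uK)
qed

lemma kf: "(\<Sum>k\<in>UNIV. K j k * Fs k i) = ((if j = i then 1 else 0) - y$j * u$i / F) / F"
proof -
  have "(\<Sum>k\<in>UNIV. K j k * Fs k i) = (F * (\<Sum>k\<in>UNIV. K j k * Fs k i)) / F" using Fp by simp
  then show ?thesis by (simp only: KFs)
qed

lemma fk: "(\<Sum>j\<in>UNIV. Fs i j * K j k) = ((if i = k then 1 else 0) - u$i * y$k / F) / F"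
proof -
  have "(\<Sum>j\<in>UNIV. Fs i j * K j k) = (F * (\<Sum>j\<in>UNIV. Fs i j * K j k)) / F" using Fp by simp
  then show ?thesis by (simp only: FsK)
qed

lemma T1: "(\<Sum>j\<in>UNIV. \<Sum>k\<in>UNIV. K j k * (Fs i k * m j)) = m i / F"
proof -
  have "(\<Sum>j\<in>UNIV. \<Sum>k\<in>UNIV. K j k * (Fs i k * m j)) = (\<Sum>j\<in>UNIV. m j * (\<Sum>k\<in>UNIV. K j k * Fs k i))"
    by (simp add: sum_distrib_left S2[of i] mult_ac)
  also have "\<dots> = (\<Sum>j\<in>UNIV. m j * (((if j = i then 1 else 0) - y$j * u$i / F) / F))"
    by (simp only: kf)
  also have "\<dots> = (\<Sum>j\<in>UNIV. (1/F) * (m j * (if j = i then 1 else 0)) - (u$i / F^2) * (m j * y$j))"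
    by (intro sum.cong refl) (use Fp in \<open>auto simp: field_simps power2_eq_square\<close>)
  also have "\<dots> = (1/F) * (\<Sum>j\<in>UNIV. m j * (if j = i then 1 else 0)) - (u$i / F^2) * (\<Sum>j\<in>UNIV. m j * y$j)"
    by (simp only: sum_subtractf sum_distrib_left)
  also have "\<dots> = m i / F" by (simp add: delta_sum' my)
  finally show ?thesis .
qed

lemma T3: "(\<Sum>j\<in>UNIV. \<Sum>k\<in>UNIV. K j k * (Fs i j * m k)) = m i / F"
proof -
  have "(\<Sum>j\<in>UNIV. \<Sum>k\<in>UNIV. K j k * (Fs i j * m k)) = (\<Sum>k\<in>UNIV. \<Sum>j\<in>UNIV. m k * (Fs i j * K j k))"
    by (subst sum.swap) (simp add: mult_ac)
  also have "\<dots> = (\<Sum>k\<in>UNIV. m k * (\<Sum>j\<in>UNIV. Fs i j * K j k))"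
    by (simp add: sum_distrib_left)
  also have "\<dots> = (\<Sum>k\<in>UNIV. m k * (((if i = k then 1 else 0) - u$i * y$k / F) / F))"
    by (simp only: fk)
  also have "\<dots> = (\<Sum>k\<in>UNIV. (1/F) * (m k * (if k = i then 1 else 0)) - (u$i / F^2) * (m k * y$k))"
    by (intro sum.cong refl) (use Fp in \<open>auto simp: field_simps power2_eq_square\<close>)
  also have "\<dots> = (1/F) * (\<Sum>k\<in>UNIV. m k * (if k = i then 1 else 0)) - (u$i / F^2) * (\<Sum>k\<in>UNIV. m k * y$k)"
    by (simp only: sum_subtractf sum_distrib_left)
  also have "\<dots> = m i / F" by (simp add: delta_sum' my)
  finally show ?thesis .
qed

lemma T2: "(\<Sum>j\<in>UNIV. \<Sum>k\<in>UNIV. K j k * (Fs j k * m i)) = m i * (real CARD('n) - 1) / F"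
proof -
  have "(\<Sum>j\<in>UNIV. \<Sum>k\<in>UNIV. K j k * (Fs j k * m i)) = m i * (\<Sum>j\<in>UNIV. (\<Sum>k\<in>UNIV. K j k * Fs k j))"
    by (simp add: sum_distrib_left, intro sum.cong refl) (metis S2 mult.commute mult.left_commute)
  also have "\<dots> = m i * (\<Sum>j\<in>UNIV. ((if j = j then 1 else 0) - y$j * u$j / F) / F)"
    by (simp only: kf)
  also have "\<dots> = m i * (\<Sum>j\<in>UNIV. (1 - y$j * u$j / F) / F)"
    by simp
  also have "\<dots> = m i * ((real CARD('n) - (\<Sum>j\<in>UNIV. u$j * y$j) / F) / F)"
    by (simp add: sum_divide_distrib[symmetric] sum_subtractf mult.commute)
  also have "\<dots> = m i * (real CARD('n) - 1) / F" using E1 Fp by simp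
  finally show ?thesis .
qed


definition "hf i j = gm $ i $ j - u$i * u$j"
definition "hg i j = Am $ i $ j - v i * v j"
definition "cvf i = (\<Sum>j\<in>UNIV. \<Sum>k\<in>UNIV. K j k * Cf i j k)"
definition "cvg i = (\<Sum>j\<in>UNIV. \<Sum>k\<in>UNIV. B j k * Cg i j k)"
definition "Mf i = cvf i / (real CARD('n) + 1)"
definition "Mg i = cvg i / (real CARD('n) + 1)"

lemma cvg_eq: "cvg i = cvf i + (real CARD('n) + 1) * m i / (2 * G)"
proof -
  have "cvg i = (1/\<tau>) * (\<Sum>j\<in>UNIV. \<Sum>k\<in>UNIV. K j k * Cg i j k)"
    unfolding cvg_def by (rule traceB) (simp_all add: Cg_c1 Cg_c2)
  also have "(\<Sum>j\<in>UNIV. \<Sum>k\<in>UNIV. K j k * Cg i j k) =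
     \<tau> * cvf i + (c/2) * ((\<Sum>j\<in>UNIV. \<Sum>k\<in>UNIV. K j k * (Fs i k * m j)) + (\<Sum>j\<in>UNIV. \<Sum>k\<in>UNIV. K j k * (Fs j k * m i))
       + (\<Sum>j\<in>UNIV. \<Sum>k\<in>UNIV. K j k * (Fs i j * m k)))"
    by (simp add: Cg_eq cvf_def algebra_simps sum.distrib sum_distrib_left)
  also have "\<dots> = \<tau> * cvf i + (c/2) * (m i / F + m i * (real CARD('n) - 1) / F + m i / F)"
    by (simp only: T1 T2 T3)
  also have "(1/\<tau>) * (\<tau> * cvf i + (c/2) * (m i / F + m i * (real CARD('n) - 1) / F + m i / F))
     = cvf i + (c/\<tau>) * ((real CARD('n) + 1) * m i / F) / 2"
    using tau_pos Fp by (simp add: field_simps)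
  also have "c/\<tau> = F/G" using cp Fp Gp by (simp add: \<tau>_def)
  finally show ?thesis using Fp Gp by simp
qed

lemma main_alg:
  "(\<forall>i j k. Cf i j k = hf i j * Mf k + hf j k * Mf i + hf k i * Mf j) \<longleftrightarrow>
   (\<forall>i j k. Cg i j k = hg i j * Mg k + hg j k * Mg i + hg k i * Mg j)"
proof -
  have N: "real CARD('n) + 1 > 0" by simp
  have Mg: "Mg i = Mf i + m i / (2 * G)" for i
    using N by (simp add: Mg_def Mf_def cvg_eq field_simps)
  have hf: "hf i j = F * Fs i j" for i j by (simp add: hf_def gm_e)
  have hg: "hg i j = \<tau> * (F * Fs i j)" for i j using Fp by (simp add: hg_def Am_e \<tau>_def)
  have T: "Cg i j k - (hg i j * Mg k + hg j k * Mg i + hg k i * Mg j) =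
      \<tau> * (Cf i j k - (hf i j * Mf k + hf j k * Mf i + hf k i * Mf j))" for i j k
  proof -
    have "Fs k i = Fs i k" by (rule S2)
    then show ?thesis using Fp Gp by (simp add: Cg_eq Mg hf hg \<tau>_def field_simps)
  qed
  show ?thesis
  proof
    assume "\<forall>i j k. Cf i j k = hf i j * Mf k + hf j k * Mf i + hf k i * Mf j"
    then show "\<forall>i j k. Cg i j k = hg i j * Mg k + hg j k * Mg i + hg k i * Mg j"
      using T by (metis diff_self mult_zero_right eq_iff_diff_eq_0)
  next
    assume "\<forall>i j k. Cg i j k = hg i j * Mg k + hg j k * Mg i + hg k i * Mg j"
    then show "\<forall>i j k. Cf i j k = hf i j * Mf k + hf j k * Mf i + hf k i * Mf j"
      using T tau_pos by (metis eq_iff_diff_eq_0 mult_eq_0_iff less_irrefl)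
  qed
qed

end


lemma cdiff:
  fixes f :: "'a::real_normed_vector \<Rightarrow> real"
  shows "f differentiable at z \<Longrightarrow> (\<lambda>z. c * f z + d) differentiable at z"
  by (intro differentiable_add) simp_all

lemma dy_affine:
  fixes f :: "real^'n \<Rightarrow> real"
  shows "f differentiable at z \<Longrightarrow> dy (\<lambda>z. c * f z + d) k z = c * dy f k z"
  by (simp add: dy_add differentiable_mult dy_cmult dy_const)

context hfun
begin

context
  fixes c :: real and bb :: "real^'n"
begin

definition "Gf = (\<lambda>z. c * F z + (\<Sum>l\<in>UNIV. bb $ l * z $ l))"

lemma G0: "z \<noteq> 0 \<Longrightarrow> Gf differentiable at z"
  unfolding Gf_def using sm3_D(1)[OF sm] lin_diff
  by (intro differentiable_add) simp_all

lemma G1: "z \<noteq> 0 \<Longrightarrow> dy Gf i z = c * dy F i z + bb $ i"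
  unfolding Gf_def using sm3_D(1)[OF sm]
  by (simp add: dy_add differentiable_mult lin_diff dy_cmult dy_lin)

lemma G2: "z \<noteq> 0 \<Longrightarrow> dy (dy Gf i) j z = c * dy (dy F i) j z"
proof -
  assume z: "z \<noteq> 0"
  have "dy (dy Gf i) j z = dy (\<lambda>w. c * dy F i w + bb $ i) j z"
    by (rule dy_local[OF o]) (use z G1 in auto)
  also have "\<dots> = c * dy (dy F i) j z" using dy_affine sm3_D(2)[OF sm z] by blast
  finally show ?thesis .
qed

lemma G3: "z \<noteq> 0 \<Longrightarrow> dy (dy (dy Gf i) j) k z = c * dy (dy (dy F i) j) k z"
proof -
  assume z: "z \<noteq> 0"
  have "dy (dy (dy Gf i) j) k z = dy (\<lambda>w. c * dy (dy F i) j w + 0) k z"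
    by (rule dy_local[OF o]) (use z G2 in auto)
  also have "\<dots> = c * dy (dy (dy F i) j) k z" using dy_affine sm3_D(3)[OF sm z] by blast
  finally show ?thesis .
qed

lemma Gsm3: "sm3 Gf"
  unfolding sm3_def
proof (intro allI impI conjI)
  fix z :: "real^'n" assume z: "z \<noteq> 0"
  show "Gf differentiable at z" using G0 z .
  show "dy Gf i differentiable at z" for i
    by (rule diff_local[OF cdiff[where c=c and d="bb $ i", OF sm3_D(2)[OF sm z]] o]) (use z G1 in auto)
  show "dy (dy Gf i) j differentiable at z" for i j
    by (rule diff_local[OF cdiff[where c=c and d=0, OF sm3_D(3)[OF sm z]] o]) (use z G2 in auto)
  show "dy (dy (dy Gf i) j) k differentiable at z" for i j k
    by (rule diff_local[OF cdiff[where c=c and d=0, OF sm3_D(4)[OF sm z]] o]) (use z G3 in auto)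
qed

end
end


lemma pd_inv:
  fixes M :: "real^'n^'n"
  assumes pd: "\<And>v. v \<noteq> 0 \<Longrightarrow> (\<Sum>i\<in>UNIV. \<Sum>j\<in>UNIV. M$i$j * v$i * v$j) > 0"
  shows "invertible M"
proof -
  have "\<forall>x. M *v x = 0 \<longrightarrow> x = 0"
  proof (intro allI impI)
    fix x assume Mx: "M *v x = 0"
    have "(\<Sum>i\<in>UNIV. \<Sum>j\<in>UNIV. M$i$j * x$i * x$j) = (\<Sum>i\<in>UNIV. x$i * (M *v x)$i)"
      by (simp add: matrix_vector_mult_def sum_distrib_left mult_ac)
    also have "\<dots> = 0" using Mx by simp
    finally show "x = 0" using pd[of x] by fastforce
  qed
  then show ?thesis using matrix_left_invertible_ker invertible_left_inverse by blast
qed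

context hfun
begin

lemma point_equiv:
  assumes y: "y \<noteq> 0" and Fy: "F y > 0" and Gy: "Gf c bb y > 0" and cp: "c > 0"
    and pdF: "\<And>v. v \<noteq> 0 \<Longrightarrow> (\<Sum>i\<in>UNIV. \<Sum>j\<in>UNIV. gtens F y i j * v$i * v$j) > 0"
    and pdG: "\<And>v. v \<noteq> 0 \<Longrightarrow> (\<Sum>i\<in>UNIV. \<Sum>j\<in>UNIV. gtens (Gf c bb) y i j * v$i * v$j) > 0"
  shows "(\<forall>i j k. ctens F y i j k = htens F y i j * Mvec F y k + htens F y j k * Mvec F y i + htens F y k i * Mvec F y j)
     \<longleftrightarrow> (\<forall>i j k. ctens (Gf c bb) y i j k = htens (Gf c bb) y i j * Mvec (Gf c bb) y k
          + htens (Gf c bb) y j k * Mvec (Gf c bb) y i + htens (Gf c bb) y k i * Mvec (Gf c bb) y j)"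
proof -
  define u where "u = (\<chi> i. dy F i y)"
  define Fs where "Fs i j = dy (dy F i) j y" for i j
  define Ft where "Ft i j k = dy (dy (dy F i) j) k y" for i j k
  have gF: "gmat F y = (\<chi> i j. u$i*u$j + F y * Fs i j)"
    by (simp add: gmat_def vec_eq_iff gt_formula[OF sm y] u_def Fs_def)
  have gG: "gmat (Gf c bb) y = (\<chi> i j. (c*u$i + bb$i)*(c*u$j + bb$j) + Gf c bb y * (c * Fs i j))"
    by (simp add: gmat_def vec_eq_iff gt_formula[OF Gsm3 y] u_def Fs_def G1[OF y] G2[OF y])
  have ig: "invertible (\<chi> i j. u$i*u$j + F y * Fs i j)"
    unfolding gF[symmetric] by (rule pd_inv) (simp add: gmat_def pdF)
  have iA: "invertible (\<chi> i j. (c*u$i + bb$i)*(c*u$j + bb$j) + Gf c bb y * (c * Fs i j))"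
    unfolding gG[symmetric] by (rule pd_inv) (simp add: gmat_def pdG)
  interpret a: alg "F y" "Gf c bb y" c u bb y Fs Ft
  proof
    show "F y > 0" "Gf c bb y > 0" "c > 0" by fact+
    show "Gf c bb y = c * F y + (\<Sum>l\<in>UNIV. bb $ l * y $ l)" by (simp add: Gf_def)
    show "(\<Sum>k\<in>UNIV. u $ k * y $ k) = F y" using E1[OF y] by (simp add: u_def)
    show "\<And>i. (\<Sum>k\<in>UNIV. Fs i k * y $ k) = 0" using E2[OF y] by (simp add: Fs_def)
    show "\<And>i j. Fs i j = Fs j i" using S2[OF y] by (simp add: Fs_def)
    show "\<And>i j. (\<Sum>k\<in>UNIV. Ft i j k * y $ k) = - Fs i j" using E3[OF y] by (simp add: Fs_def Ft_def)
    show "\<And>i k. (\<Sum>j\<in>UNIV. Ft i j k * y $ j) = - Fs i k" using E3'[OF y] by (simp add: Fs_def Ft_def)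
  qed (fact ig iA)+
  have cF: "ctens F y i j k = a.Cf i j k" for i j k
    unfolding a.Cf_def by (simp add: ct_formula[OF sm y] u_def Fs_def Ft_def)
  have cG: "ctens (Gf c bb) y i j k = a.Cg i j k" for i j k
    unfolding a.Cg_def a.v_def by (simp add: ct_formula[OF Gsm3 y] u_def Fs_def Ft_def G1[OF y] G2[OF y] G3[OF y])
  have hF: "htens F y i j = a.hf i j" for i j
    unfolding a.hf_def a.gm_def by (simp add: htens_def ltens_def gt_formula[OF sm y] u_def Fs_def)
  have hG: "htens (Gf c bb) y i j = a.hg i j" for i j
    unfolding a.hg_def a.Am_def a.v_def by (simp add: htens_def ltens_def gt_formula[OF Gsm3 y] u_def Fs_def G1[OF y] G2[OF y])
  have MF: "Mvec F y i = a.Mf i" for i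
    unfolding a.Mf_def a.cvf_def a.K_def a.gm_def by (simp add: Mvec_def cvec_def ginv_def cF gF)
  have MG: "Mvec (Gf c bb) y i = a.Mg i" for i
    unfolding a.Mg_def a.cvg_def a.B_def a.Am_def by (simp add: Mvec_def cvec_def ginv_def cG gG)
  show ?thesis unfolding cF cG hF hG MF MG by (rule a.main_alg)
qed

end


theorem theorem1:
  fixes U :: "(real^'n) set"
    and L :: "real^'n \<Rightarrow> real^'n \<Rightarrow> real"
    and \<sigma> :: "real^'n \<Rightarrow> real"
    and b :: "real^'n \<Rightarrow> real^'n"
  assumes "CARD('n) \<ge> 3"
    and "open U"
    and "finsler_metric U L"
    and "smooth_on U \<sigma>"
    and "\<forall>i. smooth_on U (\<lambda>x. b x $ i)"
    and "finsler_metric U (conf_beta_change \<sigma> b L)"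
  shows "C_reducible U L \<longleftrightarrow> C_reducible U (conf_beta_change \<sigma> b L)"
proof -
  have pt: "(\<forall>i j k. ctens (L x) y i j k = htens (L x) y i j * Mvec (L x) y k + htens (L x) y j k * Mvec (L x) y i + htens (L x) y k i * Mvec (L x) y j)
     \<longleftrightarrow> (\<forall>i j k. ctens (conf_beta_change \<sigma> b L x) y i j k = htens (conf_beta_change \<sigma> b L x) y i j * Mvec (conf_beta_change \<sigma> b L x) y k
          + htens (conf_beta_change \<sigma> b L x) y j k * Mvec (conf_beta_change \<sigma> b L x) y i + htens (conf_beta_change \<sigma> b L x) y k i * Mvec (conf_beta_change \<sigma> b L x) y j)"
    if x: "x \<in> U" and y: "y \<noteq> 0" for x y
  proof -
    have hom: "\<And>z t. z \<noteq> 0 \<Longrightarrow> t > 0 \<Longrightarrow> L x (t *\<^sub>R z) = t * L x z"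
      using assms(3) x by (simp add: finsler_metric_def)
    interpret h: hfun "L x"
      by unfold_locales (fact finsler_sm3[OF assms(3,2) x], fact hom)
    have cb: "conf_beta_change \<sigma> b L x = h.Gf (exp (\<sigma> x)) (b x)"
      unfolding conf_beta_change_def h.Gf_def by simp
    show ?thesis unfolding cb
    proof (rule h.point_equiv[OF y])
      show "L x y > 0" using assms(3) x y by (simp add: finsler_metric_def)
      show "h.Gf (exp (\<sigma> x)) (b x) y > 0" using assms(6) x y by (simp add: finsler_metric_def cb[symmetric])
      show "exp (\<sigma> x) > 0" by simp
      show "\<And>v. v \<noteq> 0 \<Longrightarrow> (\<Sum>i\<in>UNIV. \<Sum>j\<in>UNIV. gtens (L x) y i j * v$i * v$j) > 0"
        using assms(3) x y by (simp add: finsler_metric_def)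
      show "\<And>v. v \<noteq> 0 \<Longrightarrow> (\<Sum>i\<in>UNIV. \<Sum>j\<in>UNIV. gtens (h.Gf (exp (\<sigma> x)) (b x)) y i j * v$i * v$j) > 0"
        using assms(6) x y by (simp add: finsler_metric_def cb[symmetric])
    qed
  qed
  show ?thesis unfolding C_reducible_def using pt by blast
qed


end
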